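(* Let $K$ be a positive integer, let $J$ be a positive integer or $\infty$, and write $[J]=\{1,\dots,J\}$ (with $[J]=\mathbb{Z}_+$ if $J=\infty$). Let $Q=[Q_1,\dots,Q_K]$ with $Q_k:[J]\to\{0,1\}$ and $A=[A_1,\dots,A_K]$ with $A_k:[J]\to\mathbb{R}$, and assume: (2) for every $S\subset\{1,\dots,K\}$ with $\mathcal{R}(S)$ non-empty, the columns of $A_{[\mathcal{R}(S),S]}$ are linearly independent; and (3) for every $l$, $A_l(j)=0$ whenever $Q_l(j)=0$. Suppose $k'$ masks $k\neq k'$, and let $\epsilon\in\mathbb{R}$. Then the matrix $\widetilde A=[A_1,\dots,A_{k-1},A_k+\epsilon A_{k'},A_{k+1},\dots,A_K]$ also satisfies conditions (2) and (3) (with the same $Q$).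
   Context: $\operatorname{supp}(Q_l)=\{j: Q_l(j)=1\}$. For $S\subset\{1,\dots,K\}$, $\mathcal{R}(S)\subset[J]$ is the set of indices $j$ such that $Q_l(j)=1$ for all $l\in S$ and $Q_l(j)=0$ for all $l\notin S$. $A_{[\mathcal{R},S]}$ denotes the submatrix of $A$ with rows in $\mathcal{R}$ and columns in $S$. We say $k'$ masks $k$ if $\operatorname{supp}(Q_{k'})\subset\operatorname{supp}(Q_k)$. *)

theory Defs
  imports Main "HOL-Library.Extended_Nat"
begin

definition rows :: "enat \<Rightarrow> nat set" where
  "rows J = {j. 1 \<le> j \<and> enat j \<le> J}"

definition supp :: "enat \<Rightarrow> (nat \<Rightarrow> nat \<Rightarrow> nat) \<Rightarrow> nat \<Rightarrow> nat set" where
  "supp J Q l = {j \<in> rows J. Q l j = 1}"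

definition Rset :: "nat \<Rightarrow> enat \<Rightarrow> (nat \<Rightarrow> nat \<Rightarrow> nat) \<Rightarrow> nat set \<Rightarrow> nat set" where
  "Rset K J Q S = {j \<in> rows J. (\<forall>l\<in>S. Q l j = 1) \<and> (\<forall>l\<in>{1..K} - S. Q l j = 0)}"

definition cols_lin_indep :: "(nat \<Rightarrow> nat \<Rightarrow> real) \<Rightarrow> nat set \<Rightarrow> nat set \<Rightarrow> bool" where
  "cols_lin_indep A R S \<longleftrightarrow>
     (\<forall>c :: nat \<Rightarrow> real. (\<forall>j\<in>R. (\<Sum>l\<in>S. c l * A l j) = 0) \<longrightarrow> (\<forall>l\<in>S. c l = 0))"

definition cond2 :: "nat \<Rightarrow> enat \<Rightarrow> (nat \<Rightarrow> nat \<Rightarrow> nat) \<Rightarrow> (nat \<Rightarrow> nat \<Rightarrow> real) \<Rightarrow> bool" where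
  "cond2 K J Q A \<longleftrightarrow>
     (\<forall>S. S \<subseteq> {1..K} \<longrightarrow> Rset K J Q S \<noteq> {} \<longrightarrow> cols_lin_indep A (Rset K J Q S) S)"

definition cond3 :: "nat \<Rightarrow> enat \<Rightarrow> (nat \<Rightarrow> nat \<Rightarrow> nat) \<Rightarrow> (nat \<Rightarrow> nat \<Rightarrow> real) \<Rightarrow> bool" where
  "cond3 K J Q A \<longleftrightarrow> (\<forall>l\<in>{1..K}. \<forall>j\<in>rows J. Q l j = 0 \<longrightarrow> A l j = 0)"

definition masks :: "enat \<Rightarrow> (nat \<Rightarrow> nat \<Rightarrow> nat) \<Rightarrow> nat \<Rightarrow> nat \<Rightarrow> bool" where
  "masks J Q k' k \<longleftrightarrow> supp J Q k' \<subseteq> supp J Q k"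

end

theory Submission
  imports Defs
begin

theorem lemma2:
  fixes K :: nat and J :: enat
    and Q :: "nat \<Rightarrow> nat \<Rightarrow> nat" and A :: "nat \<Rightarrow> nat \<Rightarrow> real"
    and k k' :: nat and \<epsilon> :: real
  assumes "K \<ge> 1" and "J \<ge> 1"
    and "\<forall>l\<in>{1..K}. \<forall>j\<in>rows J. Q l j \<in> {0, 1}"
    and "cond2 K J Q A" and "cond3 K J Q A"
    and "k \<in> {1..K}" and "k' \<in> {1..K}" and "k \<noteq> k'"
    and "masks J Q k' k"
  shows "cond2 K J Q (A(k := (\<lambda>j. A k j + \<epsilon> * A k' j)))
       \<and> cond3 K J Q (A(k := (\<lambda>j. A k j + \<epsilon> * A k' j)))"
proof -
  define B where "B = A(k := (\<lambda>j. A k j + \<epsilon> * A k' j))"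
  have Bk: "\<And>j. B k j = A k j + \<epsilon> * A k' j" and Bo: "\<And>l j. l \<noteq> k \<Longrightarrow> B l j = A l j"
    by (auto simp: B_def)
  have c3: "cond3 K J Q B"
    unfolding cond3_def
  proof (intro ballI impI)
    fix l j assume l: "l \<in> {1..K}" and j: "j \<in> rows J" and q: "Q l j = 0"
    show "B l j = 0"
    proof (cases "l = k")
      case True
      have "Q k' j \<noteq> 1"
      proof
        assume "Q k' j = 1"
        then have "j \<in> supp J Q k'" using j by (simp add: supp_def)
        then have "j \<in> supp J Q k" using assms(9) by (auto simp: masks_def)
        then show False using q True by (simp add: supp_def)
      qed
      then have "Q k' j = 0" using assms(3,7) j by auto
      then have "A k' j = 0" using assms(5,7) j by (auto simp: cond3_def)
      moreover have "A k j = 0" using assms(5) l j q True by (auto simp: cond3_def)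
      ultimately show ?thesis using True Bk by simp
    next
      case False
      then show ?thesis using Bo assms(5) l j q by (auto simp: cond3_def)
    qed
  qed
  have c2: "cond2 K J Q B"
    unfolding cond2_def
  proof (intro allI impI)
    fix S assume S: "S \<subseteq> {1..K}" and Rne: "Rset K J Q S \<noteq> {}"
    have fin: "finite S" using S finite_subset by blast
    have indA: "cols_lin_indep A (Rset K J Q S) S" using assms(4) S Rne by (auto simp: cond2_def)
    show "cols_lin_indep B (Rset K J Q S) S"
      unfolding cols_lin_indep_def
    proof (intro allI impI)
      fix c :: "nat \<Rightarrow> real"
      assume h: "\<forall>j\<in>Rset K J Q S. (\<Sum>l\<in>S. c l * B l j) = 0"
      show "\<forall>l\<in>S. c l = 0"
      proof (cases "k \<in> S")
        case False
        have "\<forall>j\<in>Rset K J Q S. (\<Sum>l\<in>S. c l * A l j) = 0"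
        proof
          fix j assume "j \<in> Rset K J Q S"
          moreover have "(\<Sum>l\<in>S. c l * B l j) = (\<Sum>l\<in>S. c l * A l j)"
            using False Bo by (intro sum.cong) (metis, metis)
          ultimately show "(\<Sum>l\<in>S. c l * A l j) = 0" using h by simp
        qed
        then show ?thesis using indA by (simp add: cols_lin_indep_def)
      next
        case kS: True
        have split: "(\<Sum>l\<in>S. c l * B l j) = (\<Sum>l\<in>S. c l * A l j) + c k * \<epsilon> * A k' j" for j
        proof -
          have "(\<Sum>l\<in>S. c l * B l j) = c k * B k j + (\<Sum>l\<in>S - {k}. c l * B l j)"
            using fin kS by (simp add: sum.remove)
          also have "(\<Sum>l\<in>S - {k}. c l * B l j) = (\<Sum>l\<in>S - {k}. c l * A l j)"
            using Bo by (intro sum.cong) auto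
          also have "c k * B k j = c k * A k j + c k * \<epsilon> * A k' j"
            using Bk by (simp add: algebra_simps)
          finally show ?thesis using fin kS by (simp add: sum.remove)
        qed
        show ?thesis
        proof (cases "k' \<in> S")
          case True
          define d where "d = c(k' := c k' + c k * \<epsilon>)"
          have "\<forall>j\<in>Rset K J Q S. (\<Sum>l\<in>S. d l * A l j) = 0"
          proof
            fix j assume j: "j \<in> Rset K J Q S"
            have "(\<Sum>l\<in>S. d l * A l j) = d k' * A k' j + (\<Sum>l\<in>S - {k'}. d l * A l j)"
              using fin True by (simp add: sum.remove)
            also have "(\<Sum>l\<in>S - {k'}. d l * A l j) = (\<Sum>l\<in>S - {k'}. c l * A l j)"
              by (intro sum.cong) (auto simp: d_def)
            also have "d k' * A k' j = c k' * A k' j + c k * \<epsilon> * A k' j"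
              by (simp add: d_def algebra_simps)
            finally have "(\<Sum>l\<in>S. d l * A l j) = (\<Sum>l\<in>S. c l * A l j) + c k * \<epsilon> * A k' j"
              using fin True by (simp add: sum.remove)
            then show "(\<Sum>l\<in>S. d l * A l j) = 0" using h j split by simp
          qed
          then have d0: "\<forall>l\<in>S. d l = 0" using indA by (simp add: cols_lin_indep_def)
          then have ck: "c k = 0" using kS assms(8) by (auto simp: d_def)
          have "c k' = 0" using d0 True ck by (auto simp: d_def)
          then show ?thesis using d0 ck by (auto simp: d_def split: if_splits)
        next
          case False
          have "\<forall>j\<in>Rset K J Q S. (\<Sum>l\<in>S. c l * A l j) = 0"
          proof
            fix j assume j: "j \<in> Rset K J Q S"
            have "Q k' j = 0" using j False assms(7) by (auto simp: Rset_def)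
            then have "A k' j = 0" using assms(5,7) j by (auto simp: cond3_def Rset_def)
            then show "(\<Sum>l\<in>S. c l * A l j) = 0" using h j split[of j] by simp
          qed
          then show ?thesis using indA by (simp add: cols_lin_indep_def)
        qed
      qed
    qed
  qed
  show ?thesis using c2 c3 by (simp add: B_def)
qed

end
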